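(* For a $K$-armed bandit with rewards $r\in\mathbb{R}^K$, a full-support policy $\pi$, and step size $\eta>0$, let $\pi'(i)=\pi(i)e^{\eta f_i}/Z$ with $Z=\mathbb{E}_\pi[e^{\eta f}]=\sum_{i}\pi(i)e^{\eta f_i}$. Then, with $V=\pi^\top r$ and $V'=\pi'^\top r$, \[ V'-V=\frac{\mathrm{Cov}_\pi(e^{\eta f},U)}{\mathbb{E}_\pi[e^{\eta f}]}=\frac1Z\sum_{i:\,U_i>0}\pi_iU_i\big(e^{\eta U_i}-1\big)\;\ge\;0. \]
   Context: $U_i:=r(i)-\pi^\top r$ is the advantage of arm $i$, $f_i:=U_i\mathbf{1}\{U_i>0\}$ is the gated advantage, $\pi_i:=\pi(i)$, and $\mathrm{Cov}_\pi$ denotes covariance under $i\sim\pi$. This is the discrete EG update. *)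

theory Defs
  imports "HOL-Analysis.Analysis"
begin

definition expect :: "nat \<Rightarrow> (nat \<Rightarrow> real) \<Rightarrow> (nat \<Rightarrow> real) \<Rightarrow> real" where
  "expect K \<pi> X = (\<Sum>i<K. \<pi> i * X i)"

definition cov :: "nat \<Rightarrow> (nat \<Rightarrow> real) \<Rightarrow> (nat \<Rightarrow> real) \<Rightarrow> (nat \<Rightarrow> real) \<Rightarrow> real" where
  "cov K \<pi> X Y = expect K \<pi> (\<lambda>i. X i * Y i) - expect K \<pi> X * expect K \<pi> Y"

definition policy_value :: "nat \<Rightarrow> (nat \<Rightarrow> real) \<Rightarrow> (nat \<Rightarrow> real) \<Rightarrow> real" where
  "policy_value K \<pi> r = (\<Sum>i<K. \<pi> i * r i)"

definition adv :: "nat \<Rightarrow> (nat \<Rightarrow> real) \<Rightarrow> (nat \<Rightarrow> real) \<Rightarrow> nat \<Rightarrow> real" where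
  "adv K \<pi> r i = r i - policy_value K \<pi> r"

definition gated_adv :: "nat \<Rightarrow> (nat \<Rightarrow> real) \<Rightarrow> (nat \<Rightarrow> real) \<Rightarrow> nat \<Rightarrow> real" where
  "gated_adv K \<pi> r i = (if adv K \<pi> r i > 0 then adv K \<pi> r i else 0)"

definition partition_Z :: "nat \<Rightarrow> real \<Rightarrow> (nat \<Rightarrow> real) \<Rightarrow> (nat \<Rightarrow> real) \<Rightarrow> real" where
  "partition_Z K \<eta> \<pi> r = (\<Sum>i<K. \<pi> i * exp (\<eta> * gated_adv K \<pi> r i))"

definition eg_update :: "nat \<Rightarrow> real \<Rightarrow> (nat \<Rightarrow> real) \<Rightarrow> (nat \<Rightarrow> real) \<Rightarrow> nat \<Rightarrow> real" where
  "eg_update K \<eta> \<pi> r i = \<pi> i * exp (\<eta> * gated_adv K \<pi> r i) / partition_Z K \<eta> \<pi> r"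

end

theory Submission
  imports Defs
begin

theorem lemma5:
  fixes K :: nat and \<pi> r :: "nat \<Rightarrow> real" and \<eta> :: real
  assumes "K \<ge> 1"
    and "\<And>i. i < K \<Longrightarrow> \<pi> i > 0"
    and "(\<Sum>i<K. \<pi> i) = 1"
    and "\<eta> > 0"
  shows "policy_value K (eg_update K \<eta> \<pi> r) r - policy_value K \<pi> r
           = cov K \<pi> (\<lambda>i. exp (\<eta> * gated_adv K \<pi> r i)) (adv K \<pi> r)
             / expect K \<pi> (\<lambda>i. exp (\<eta> * gated_adv K \<pi> r i)) \<and>
         cov K \<pi> (\<lambda>i. exp (\<eta> * gated_adv K \<pi> r i)) (adv K \<pi> r)
             / expect K \<pi> (\<lambda>i. exp (\<eta> * gated_adv K \<pi> r i))
           = (1 / partition_Z K \<eta> \<pi> r) *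
             (\<Sum>i\<in>{i. i < K \<and> adv K \<pi> r i > 0}.
                 \<pi> i * adv K \<pi> r i * (exp (\<eta> * adv K \<pi> r i) - 1)) \<and>
         (1 / partition_Z K \<eta> \<pi> r) *
             (\<Sum>i\<in>{i. i < K \<and> adv K \<pi> r i > 0}.
                 \<pi> i * adv K \<pi> r i * (exp (\<eta> * adv K \<pi> r i) - 1)) \<ge> 0"
proof -
  define V where "V = policy_value K \<pi> r"
  define U where "U = adv K \<pi> r"
  define e where "e = (\<lambda>i. exp (\<eta> * gated_adv K \<pi> r i))"
  define Z where "Z = partition_Z K \<eta> \<pi> r"
  define S where "S = (\<Sum>i\<in>{i. i < K \<and> U i > 0}. \<pi> i * U i * (exp (\<eta> * U i) - 1))"
  have Ui: "U i = r i - V" for i by (simp add: U_def V_def adv_def)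
  have ei: "e i = (if U i > 0 then exp (\<eta> * U i) else 1)" for i
    by (simp add: e_def U_def gated_adv_def)
  have Ze: "Z = (\<Sum>i<K. \<pi> i * e i)" by (simp add: Z_def partition_Z_def e_def)
  have EZ: "expect K \<pi> e = Z" by (simp add: Ze expect_def)
  have sU: "(\<Sum>i<K. \<pi> i * U i) = 0"
  proof -
    have "(\<Sum>i<K. \<pi> i * U i) = (\<Sum>i<K. \<pi> i * r i) - V * (\<Sum>i<K. \<pi> i)"
      by (simp add: Ui algebra_simps sum_subtractf sum_distrib_left)
    then show ?thesis using assms(3) by (simp add: V_def policy_value_def)
  qed
  have Zpos: "Z > 0"
  proof -
    have "(\<Sum>i<K. \<pi> i * e i) > 0"
      by (rule sum_pos) (use assms(1,2) in \<open>auto simp: e_def lessThan_empty_iff\<close>)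
    then show ?thesis by (simp add: Ze)
  qed
  have pv: "policy_value K (eg_update K \<eta> \<pi> r) r = (\<Sum>i<K. \<pi> i * e i * r i) / Z"
    by (simp add: policy_value_def eg_update_def e_def Z_def sum_divide_distrib)
  have eU: "(\<Sum>i<K. \<pi> i * e i * U i) = (\<Sum>i<K. \<pi> i * e i * r i) - V * Z"
    by (simp add: Ui Ze algebra_simps sum_subtractf sum_distrib_left)
  have cv: "cov K \<pi> e U = (\<Sum>i<K. \<pi> i * e i * U i)"
    using sU by (simp add: cov_def expect_def algebra_simps)
  have split: "(\<Sum>i<K. \<pi> i * e i * U i) = (\<Sum>i<K. \<pi> i * U i) +
      (\<Sum>i<K. if U i > 0 then \<pi> i * U i * (exp (\<eta> * U i) - 1) else 0)"
    unfolding sum.distrib[symmetric] by (rule sum.cong) (auto simp: ei algebra_simps)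
  have setq: "{i. i < K \<and> U i > 0} = {i\<in>{..<K}. U i > 0}" by auto
  have Sq: "S = (\<Sum>i<K. if U i > 0 then \<pi> i * U i * (exp (\<eta> * U i) - 1) else 0)"
    unfolding S_def setq by (rule sum.inter_filter) simp
  have key: "(\<Sum>i<K. \<pi> i * e i * U i) = S" using split sU Sq by simp
  have Snn: "S \<ge> 0" unfolding S_def
  proof (rule sum_nonneg)
    fix i assume "i \<in> {i. i < K \<and> U i > 0}"
    then have "\<pi> i > 0" "U i > 0" using assms(2) by auto
    moreover have "exp (\<eta> * U i) \<ge> 1" using \<open>U i > 0\<close> assms(4) by simp
    ultimately show "\<pi> i * U i * (exp (\<eta> * U i) - 1) \<ge> 0" by simp
  qed
  have goal1: "policy_value K (eg_update K \<eta> \<pi> r) r - V = cov K \<pi> e U / expect K \<pi> e"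
    unfolding pv EZ cv eU using Zpos by (simp add: field_simps)
  have goal2: "cov K \<pi> e U / expect K \<pi> e = (1 / Z) * S"
    unfolding EZ cv key by simp
  have goal3: "(1 / Z) * S \<ge> 0" using Zpos Snn by simp
  show ?thesis using goal1 goal2 goal3
    unfolding V_def U_def e_def Z_def S_def by simp
qed

end
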